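(* Let $G$ be a connected graph on $X$. For every $k\ge1$ and every set $A\subseteq X$ with finite edge-boundary $\delta A$, the set $N_k(A)$ is finite.
   Context: A graph on $X$ is an irreflexive symmetric relation $G\subseteq X^2$. For $A\subseteq X$, $\delta A$ is the set of edges with one endpoint in $A$ and the other in $A^c:=X\setminus A$. A cut is a set $A$ with $A$, $A^c$ infinite and $\delta A$ finite; a cut is neat if the induced subgraphs on $A$ and $A^c$ are connected; $\mathcal C_k$ is the set of neat cuts $A$ with $|\delta A|=k$. Sets $A,B$ are nested if one of $A\cap B$, $A\cap B^c$, $A^c\cap B$, $A^c\cap B^c$ is empty. $N_k(A)$ is the set of cuts in $\mathcal C_k$ that are not nested with $A$. *)

theory Defs
  imports Main
begin

definition graph_on :: "'a set \<Rightarrow> ('a \<times> 'a) set \<Rightarrow> bool" where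
  "graph_on X G \<longleftrightarrow> G \<subseteq> X \<times> X \<and> irrefl G \<and> sym G"

definition induced_connected :: "('a \<times> 'a) set \<Rightarrow> 'a set \<Rightarrow> bool" where
  "induced_connected G S \<longleftrightarrow> (\<forall>x\<in>S. \<forall>y\<in>S. (x, y) \<in> (G \<inter> (S \<times> S))\<^sup>*)"

definition connected_graph :: "'a set \<Rightarrow> ('a \<times> 'a) set \<Rightarrow> bool" where
  "connected_graph X G \<longleftrightarrow> graph_on X G \<and> induced_connected G X"

text \<open>Edge boundary: each edge between A and its complement X - A is represented
  once, as the pair oriented from A to X - A.\<close>
definition boundary :: "'a set \<Rightarrow> ('a \<times> 'a) set \<Rightarrow> 'a set \<Rightarrow> ('a \<times> 'a) set" where
  "boundary X G A = {(x, y) \<in> G. x \<in> A \<and> y \<in> X - A}"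

definition is_cut :: "'a set \<Rightarrow> ('a \<times> 'a) set \<Rightarrow> 'a set \<Rightarrow> bool" where
  "is_cut X G A \<longleftrightarrow> A \<subseteq> X \<and> infinite A \<and> infinite (X - A) \<and> finite (boundary X G A)"

definition neat_cut :: "'a set \<Rightarrow> ('a \<times> 'a) set \<Rightarrow> 'a set \<Rightarrow> bool" where
  "neat_cut X G A \<longleftrightarrow> is_cut X G A \<and> induced_connected G A \<and> induced_connected G (X - A)"

definition neat_cuts :: "'a set \<Rightarrow> ('a \<times> 'a) set \<Rightarrow> nat \<Rightarrow> 'a set set" where
  "neat_cuts X G k = {A. neat_cut X G A \<and> card (boundary X G A) = k}"

definition nested :: "'a set \<Rightarrow> 'a set \<Rightarrow> 'a set \<Rightarrow> bool" where
  "nested X A B \<longleftrightarrow> A \<inter> B = {} \<or> A \<inter> (X - B) = {} \<or> (X - A) \<inter> B = {}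
     \<or> (X - A) \<inter> (X - B) = {}"

definition N_set :: "'a set \<Rightarrow> ('a \<times> 'a) set \<Rightarrow> nat \<Rightarrow> 'a set \<Rightarrow> 'a set set" where
  "N_set X G k A = {B \<in> neat_cuts X G k. \<not> nested X A B}"

end

theory Submission
  imports Defs
begin

lemma rtrancl_finite_sub:
  "(a,b) \<in> R\<^sup>* \<Longrightarrow> \<exists>S. finite S \<and> S \<subseteq> R \<and> (a,b) \<in> S\<^sup>*"
proof (induction rule: rtrancl_induct)
  case base
  then show ?case by blast
next
  case (step y z)
  then obtain S where S: "finite S" "S \<subseteq> R" "(a,y) \<in> S\<^sup>*" by blast
  have "(a,y) \<in> (insert (y,z) S)\<^sup>*" using S(3) rtrancl_mono[of S "insert (y,z) S"] by blast
  then have "(a,z) \<in> (insert (y,z) S)\<^sup>*" by (rule rtrancl_into_rtrancl) simp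
  then show ?case using S step by blast
qed

lemma cross_edge:
  "(a,b) \<in> S\<^sup>* \<Longrightarrow> a \<in> B \<Longrightarrow> b \<notin> B \<Longrightarrow> \<exists>x y. (x,y) \<in> S \<and> x \<in> B \<and> y \<notin> B"
  by (induction rule: rtrancl_induct) blast+

lemma rtrancl_in_X:
  "(a,b) \<in> G\<^sup>* \<Longrightarrow> G \<subseteq> X \<times> X \<Longrightarrow> a \<in> X \<Longrightarrow> b \<in> X"
  by (induction rule: rtrancl_induct) auto

definition TW :: "'a set \<Rightarrow> ('a \<times> 'a) set \<Rightarrow> 'a \<Rightarrow> 'a \<Rightarrow> nat \<Rightarrow> 'a set set" where
  "TW X G u v k = {B. B \<subseteq> X \<and> u \<in> B \<and> v \<notin> B \<and> induced_connected G B \<and>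
     induced_connected G (X - B) \<and> finite (boundary X G B) \<and> card (boundary X G B) = k}"

lemma TW_finite: "G \<subseteq> X \<times> X \<Longrightarrow> (u,v) \<in> G \<Longrightarrow> finite (TW X G u v k)"
proof (induction k arbitrary: G u v)
  case 0
  have "TW X G u v 0 = {}"
  proof (rule ccontr)
    assume "TW X G u v 0 \<noteq> {}"
    then obtain B where B: "B \<in> TW X G u v 0" by blast
    have "(u,v) \<in> boundary X G B" using B 0 unfolding TW_def boundary_def by auto
    then show False using B unfolding TW_def by auto
  qed
  then show ?case by simp
next
  case (Suc m)
  define G' where "G' = G - {(u,v)}"
  have G'X: "G' \<subseteq> X \<times> X" using Suc.prems unfolding G'_def by auto
  have ic: "induced_connected G' B = induced_connected G B"
    "induced_connected G' (X - B) = induced_connected G (X - B)"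
    if "u \<in> B" "v \<notin> B" for B
  proof -
    have "G' \<inter> (B \<times> B) = G \<inter> (B \<times> B)" "G' \<inter> ((X-B) \<times> (X-B)) = G \<inter> ((X-B) \<times> (X-B))"
      using that unfolding G'_def by auto
    then show "induced_connected G' B = induced_connected G B"
      "induced_connected G' (X - B) = induced_connected G (X - B)"
      unfolding induced_connected_def by simp_all
  qed
  have bd: "boundary X G' B = boundary X G B - {(u,v)}" for B
    unfolding boundary_def G'_def by auto
  show ?case
  proof (cases "(u,v) \<in> G'\<^sup>*")
    case True
    then obtain S where S: "finite S" "S \<subseteq> G'" "(u,v) \<in> S\<^sup>*"
      using rtrancl_finite_sub[OF True] by blast
    have "TW X G u v (Suc m) \<subseteq> (\<Union>e\<in>S. TW X G' (fst e) (snd e) m)"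
    proof
      fix B assume B: "B \<in> TW X G u v (Suc m)"
      then have uB: "u \<in> B" "v \<notin> B" unfolding TW_def by auto
      obtain x y where xy: "(x,y) \<in> S" "x \<in> B" "y \<notin> B"
        using cross_edge[OF S(3) uB] by blast
      have uvb: "(u,v) \<in> boundary X G B" using B Suc.prems unfolding TW_def boundary_def by auto
      have Bp: "B \<subseteq> X" "induced_connected G B" "induced_connected G (X - B)"
        "finite (boundary X G B)" "card (boundary X G B) = Suc m"
        using B unfolding TW_def by auto
      have c1: "finite (boundary X G' B)" using Bp(4) bd[of B] by simp
      have c2: "card (boundary X G' B) = m" using Bp(4,5) uvb bd[of B] by simp
      have "B \<in> TW X G' x y m"
        unfolding TW_def using Bp(1,2,3) xy(2,3) ic[OF uB] c1 c2 by simp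
      then show "B \<in> (\<Union>e\<in>S. TW X G' (fst e) (snd e) m)" using xy(1) by force
    qed
    moreover have "finite (\<Union>e\<in>S. TW X G' (fst e) (snd e) m)"
    proof (rule finite_UN_I[OF S(1)])
      fix e assume "e \<in> S"
      then have "(fst e, snd e) \<in> G'" using S(2) by auto
      then show "finite (TW X G' (fst e) (snd e) m)" by (rule Suc.IH[OF G'X])
    qed
    ultimately show ?thesis by (rule finite_subset)
  next
    case False
    define R where "R = {x. (u,x) \<in> G'\<^sup>*}"
    have "TW X G u v (Suc m) \<subseteq> {R}"
    proof
      fix B assume B: "B \<in> TW X G u v (Suc m)"
      then have uB: "u \<in> B" "v \<notin> B" "B \<subseteq> X" unfolding TW_def by auto
      have icB: "induced_connected G B" "induced_connected G (X - B)"
        using B unfolding TW_def by auto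
      have "B = R"
      proof
        show "B \<subseteq> R"
        proof
          fix x assume "x \<in> B"
          then have "(u,x) \<in> (G \<inter> (B \<times> B))\<^sup>*" using icB uB unfolding induced_connected_def by auto
          moreover have "G \<inter> (B \<times> B) \<subseteq> G'" using uB unfolding G'_def by auto
          ultimately show "x \<in> R" unfolding R_def using rtrancl_mono by blast
        qed
        show "R \<subseteq> B"
        proof
          fix x assume x: "x \<in> R"
          show "x \<in> B"
          proof (rule ccontr)
            assume nx: "x \<notin> B"
            have ux: "(u,x) \<in> G'\<^sup>*" using x unfolding R_def by auto
            have "x \<in> X" using rtrancl_in_X[OF ux G'X] uB by auto
            moreover have "v \<in> X" using Suc.prems by auto
            ultimately have "(x,v) \<in> (G \<inter> ((X-B) \<times> (X-B)))\<^sup>*"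
              using icB nx uB unfolding induced_connected_def by auto
            moreover have "G \<inter> ((X-B) \<times> (X-B)) \<subseteq> G'" using uB unfolding G'_def by auto
            ultimately have "(x,v) \<in> G'\<^sup>*" using rtrancl_mono by blast
            with ux have "(u,v) \<in> G'\<^sup>*" by simp
            with False show False by simp
          qed
        qed
      qed
      then show "B \<in> {R}" by simp
    qed
    then show ?thesis by (rule finite_subset) simp
  qed
qed

theorem mainTheorem17:
  fixes X :: "'a set" and G :: "('a \<times> 'a) set" and A :: "'a set" and k :: nat
  assumes "connected_graph X G"
    and "k \<ge> 1"
    and "A \<subseteq> X"
    and "finite (boundary X G A)"
  shows "finite (N_set X G k A)"
proof -
  have GX: "G \<subseteq> X \<times> X" and icX: "induced_connected G X"
    using assms(1) unfolding connected_graph_def graph_on_def by auto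
  define F where "F = fst ` boundary X G A"
  have Ffin: "finite F" unfolding F_def using assms(4) by simp
  have FX: "F \<subseteq> X" unfolding F_def boundary_def using assms(3) by auto
  define E where "E u v = (SOME S. finite S \<and> S \<subseteq> G \<and> (u,v) \<in> S\<^sup>*)" for u v
  have E: "finite (E u v) \<and> E u v \<subseteq> G \<and> (u,v) \<in> (E u v)\<^sup>*" if "u \<in> X" "v \<in> X" for u v
  proof -
    have "(u,v) \<in> (G \<inter> (X \<times> X))\<^sup>*" using icX that unfolding induced_connected_def by auto
    then have "(u,v) \<in> G\<^sup>*" using rtrancl_mono[of "G \<inter> (X \<times> X)" G] by blast
    then have "\<exists>S. finite S \<and> S \<subseteq> G \<and> (u,v) \<in> S\<^sup>*" by (rule rtrancl_finite_sub)
    then show ?thesis unfolding E_def by (rule someI_ex)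
  qed
  have "N_set X G k A \<subseteq> (\<Union>u\<in>F. \<Union>v\<in>F. \<Union>e\<in>E u v. TW X G (fst e) (snd e) k)"
  proof
    fix B assume B: "B \<in> N_set X G k A"
    then have nc: "neat_cut X G B" and cB: "card (boundary X G B) = k" and nn: "\<not> nested X A B"
      unfolding N_set_def neat_cuts_def by auto
    have finB: "finite (boundary X G B)" using cB assms(2) by (intro card_ge_0_finite) simp
    have BX: "B \<subseteq> X" and icB: "induced_connected G B" "induced_connected G (X - B)"
      using nc unfolding neat_cut_def is_cut_def by auto
    obtain a b where ab: "a \<in> A" "a \<in> B" "b \<in> X - A" "b \<in> B" using nn unfolding nested_def by blast
    obtain a' b' where ab': "a' \<in> A" "a' \<in> X - B" "b' \<in> X - A" "b' \<in> X - B"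
      using nn unfolding nested_def by blast
    have "(a,b) \<in> (G \<inter> (B \<times> B))\<^sup>*" using icB ab unfolding induced_connected_def by auto
    then obtain x y where xy: "(x,y) \<in> G \<inter> (B \<times> B)" "x \<in> A" "y \<notin> A"
      using cross_edge[of a b "G \<inter> (B \<times> B)" A] ab by auto
    have "(x,y) \<in> boundary X G A" unfolding boundary_def using xy GX by auto
    then have xF: "x \<in> F" unfolding F_def by (rule rev_image_eqI) simp
    have "(a',b') \<in> (G \<inter> ((X-B) \<times> (X-B)))\<^sup>*" using icB ab' unfolding induced_connected_def by auto
    then obtain x' y' where xy': "(x',y') \<in> G \<inter> ((X-B) \<times> (X-B))" "x' \<in> A" "y' \<notin> A"
      using cross_edge[of a' b' "G \<inter> ((X-B) \<times> (X-B))" A] ab' by auto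
    have "(x',y') \<in> boundary X G A" unfolding boundary_def using xy' GX by auto
    then have xF': "x' \<in> F" unfolding F_def by (rule rev_image_eqI) simp
    have Exx: "finite (E x x') \<and> E x x' \<subseteq> G \<and> (x,x') \<in> (E x x')\<^sup>*" using E[of x x'] FX xF xF' by blast
    obtain p q where pq: "(p,q) \<in> E x x'" "p \<in> B" "q \<notin> B"
      using cross_edge[of x x' "E x x'" B] Exx xy(1) xy'(1) by auto
    have "B \<in> TW X G p q k" unfolding TW_def using BX pq icB finB cB by auto
    then show "B \<in> (\<Union>u\<in>F. \<Union>v\<in>F. \<Union>e\<in>E u v. TW X G (fst e) (snd e) k)"
      using xF xF' pq(1) by (intro UN_I[of x] UN_I[of x'] UN_I[of "(p,q)"]) simp_all
  qed
  moreover have "finite (\<Union>u\<in>F. \<Union>v\<in>F. \<Union>e\<in>E u v. TW X G (fst e) (snd e) k)"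
  proof (intro finite_UN_I Ffin)
    fix u v assume "u \<in> F" "v \<in> F"
    then have Euv: "finite (E u v) \<and> E u v \<subseteq> G \<and> (u,v) \<in> (E u v)\<^sup>*" using E[of u v] FX by blast
    show "finite (E u v)" using Euv by simp
    fix e assume "e \<in> E u v"
    then have "(fst e, snd e) \<in> G" using Euv by auto
    then show "finite (TW X G (fst e) (snd e) k)" by (rule TW_finite[OF GX])
  qed
  ultimately show ?thesis by (rule finite_subset)
qed

end
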